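(* In the setting below, let $\mathbf{L}^+$ and $\mathbf{L}^-$ be two parabolic Higgs line bundles over $\mathbb{C}\mathbb{P}^1$ which are trivial as holomorphic line bundles, with discrete data $S$ and $S^c$ respectively. Then any extension $0\to\mathbf{L}^+\to\mathbf{E}\to\mathbf{L}^-\to0$ of PHBs is $\Delta^+$-unstable, and it is $\Delta^-$-stable if and only if it is not split.
   Context: Fix distinct $x_1,\dots,x_n\in\mathbb{C}\mathbb{P}^1$. Weights $\beta=(\beta_1(x_i),\beta_2(x_i))_i$ with $0\le\beta_1(x_i)<\beta_2(x_i)<1$ form the weight space $Q$; $\varepsilon_T(\alpha)=\sum_{i\in T}\alpha_i-\sum_{i\notin T}\alpha_i$ for $\alpha=\beta_2-\beta_1$. Walls: intersections of $Q$ with hyperplanes $\varepsilon_T(\beta_2-\beta_1)=0$; chambers: components of the complement. PHBs are rank-2 parabolic Higgs bundles $(E,\Phi)$ over $\mathbb{C}\mathbb{P}^1$, trivial as holomorphic bundles, with fixed determinant and trace-free Higgs field ($E$ has a line $E_{x_i,2}\subset E_{x_i}$ at each $x_i$ with weights $\beta_1(x_i)<\beta_2(x_i)$; $\Phi$ a meromorphic $\mathrm{End}_0(E)\otimes K_{\mathbb{C}\mathbb{P}^1}$-valued section with at most simple poles at the $x_i$, residues mapping $E_{x_i}$ into $E_{x_i,2}$ and killing $E_{x_i,2}$). A parabolic Higgs line bundle has at each $x_i$ a weight equal to $\beta_1(x_i)$ or $\beta_2(x_i)$; its discrete data is the set of $i$ with weight $\beta_2(x_i)$ (for a subbundle $L\subset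 E$ this is $\{i:L_{x_i}=E_{x_i,2}\}$; the quotient gets the complementary weights). $(E,\Phi)$ is $\beta$-stable iff every $\Phi$-invariant line subbundle $L$ with discrete data $S_L$ has $\varepsilon_{S_L}(\beta_2-\beta_1)<0$. Fix a point of $Q$ on exactly one wall $W$ with adjacent chambers $\Delta^\pm$, and let $S$ be the index set of $W$ normalized so that $\varepsilon_S(\beta_2-\beta_1)>0$ on $\Delta^+$; $\Delta^\pm$-stable means stable for weights in $\Delta^\pm$. *)

theory Defs
  imports "HOL-Analysis.Analysis"
begin

text \<open>Marked points are indexed by a finite type 'n (so n = CARD('n)).
Since every PHB is holomorphically trivial, E = C^2 x CP^1; a fibre line
E_{x_i,2} is a complex line in C^2.  A trace-free Higgs field on the trivial
bundle with at most simple poles at the x_i is determined by its residues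
A_i in sl_2(C), subject only to the residue theorem: sum of the A_i is 0.\<close>

type_synonym vec2 = "complex^2"
type_synonym mat2 = "complex^2^2"

definition cline :: "vec2 \<Rightarrow> vec2 set" where
  "cline v = {c *s v | c. True}"

definition is_line :: "vec2 set \<Rightarrow> bool" where
  "is_line L \<longleftrightarrow> (\<exists>v. v \<noteq> 0 \<and> L = cline v)"

record 'n phb =
  flag  :: "'n \<Rightarrow> vec2 set"   (* E_{x_i,2}, the line with the larger weight *)
  resid :: "'n \<Rightarrow> mat2"

definition is_PHB :: "'n::finite phb \<Rightarrow> bool" where
  "is_PHB E \<longleftrightarrow>
     (\<forall>i. is_line (flag E i)
        \<and> trace (resid E i) = 0
        \<and> (\<forall>v. resid E i *v v \<in> flag E i)
        \<and> (\<forall>v\<in>flag E i. resid E i *v v = 0))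
     \<and> (\<Sum>i\<in>UNIV. resid E i) = 0"

text \<open>Line subbundles of the trivial bundle of degree 0 are constant lines L;
L is Phi-invariant iff every residue preserves L.\<close>
definition invariant :: "'n::finite phb \<Rightarrow> vec2 set \<Rightarrow> bool" where
  "invariant E L \<longleftrightarrow> (\<forall>i. \<forall>v\<in>L. resid E i *v v \<in> L)"

definition disc :: "'n::finite phb \<Rightarrow> vec2 set \<Rightarrow> 'n set" where
  "disc E L = {i. L = flag E i}"

type_synonym 'n weight = "(real^'n) \<times> (real^'n)"

definition alpha :: "'n::finite weight \<Rightarrow> real^'n" where
  "alpha \<beta> = snd \<beta> - fst \<beta>"

definition eps :: "'n::finite set \<Rightarrow> real^'n \<Rightarrow> real" where
  "eps T a = (\<Sum>i\<in>T. a $ i) - (\<Sum>i\<in>-T. a $ i)"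

definition Q :: "'n::finite weight set" where
  "Q = {\<beta>. \<forall>i. 0 \<le> fst \<beta> $ i \<and> fst \<beta> $ i < snd \<beta> $ i \<and> snd \<beta> $ i < 1}"

definition wall :: "'n::finite set \<Rightarrow> 'n weight set" where
  "wall T = Q \<inter> {\<beta>. eps T (alpha \<beta>) = 0}"

definition chamber :: "'n::finite weight set \<Rightarrow> bool" where
  "chamber D \<longleftrightarrow> (\<exists>p \<in> Q - (\<Union>T. wall T).
       D = connected_component_set (Q - (\<Union>T. wall T)) p)"

definition stable :: "'n::finite weight \<Rightarrow> 'n phb \<Rightarrow> bool" where
  "stable \<beta> E \<longleftrightarrow>
     (\<forall>L. is_line L \<and> invariant E L \<longrightarrow> eps (disc E L) (alpha \<beta>) < 0)"

text \<open>An extension 0 -> L+ -> E -> L- -> 0 with L+, L- trivial of discrete data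
S and -S: a Phi-invariant (degree-0) line subbundle L of E with discrete data S;
the quotient then automatically carries the complementary data -S.\<close>
definition is_extension :: "'n::finite set \<Rightarrow> 'n phb \<Rightarrow> vec2 set \<Rightarrow> bool" where
  "is_extension S E L \<longleftrightarrow> is_PHB E \<and> is_line L \<and> invariant E L \<and> disc E L = S"

text \<open>Split: E is the direct sum of L and a Phi-invariant complement M which,
with the induced structure, is isomorphic to L- (discrete data -S).\<close>
definition split_ext :: "'n::finite set \<Rightarrow> 'n phb \<Rightarrow> vec2 set \<Rightarrow> bool" where
  "split_ext S E L \<longleftrightarrow>
     (\<exists>M. is_line M \<and> M \<inter> L = {0} \<and> invariant E M \<and> disc E M = -S)"

end

theory Submission imports Defs begin
lemma cline_zero: "0 \<in> cline v" unfolding cline_def by (auto intro: exI[of _ 0])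
lemma cline_eq:
  assumes "u \<noteq> 0" "u \<in> cline v" "u \<in> cline w" shows "cline v = cline w"
proof -
  obtain c where c: "u = c *s v" using assms(2) unfolding cline_def by auto
  obtain d where d: "u = d *s w" using assms(3) unfolding cline_def by auto
  have c0: "c \<noteq> 0" using c assms(1) by auto
  have d0: "d \<noteq> 0" using d assms(1) by auto
  have v: "v = (d / c) *s w" using c d c0 by (metis vector_smult_assoc vector_smult_lid nonzero_divide_eq_eq times_divide_eq_left divide_self_if mult.commute)
  have w: "w = (c / d) *s v" using c d d0 by (metis vector_smult_assoc vector_smult_lid nonzero_divide_eq_eq times_divide_eq_left divide_self_if mult.commute)
  show ?thesis unfolding cline_def
  proof (intro set_eqI iffI)
    fix x assume "x \<in> {c *s v |c. True}"
    then obtain e where "x = e *s v" by auto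
    hence "x = (e * (d / c)) *s w" using v by (simp add: vector_smult_assoc)
    thus "x \<in> {c *s w |c. True}" by blast
  next
    fix x assume "x \<in> {c *s w |c. True}"
    then obtain e where "x = e *s w" by auto
    hence "x = (e * (c / d)) *s v" using w by (simp add: vector_smult_assoc)
    thus "x \<in> {c *s v |c. True}" by blast
  qed
qed
lemma eps_alt: "eps X (a::real^'n::finite) = 2 * (\<Sum>i\<in>X. a $ i) - (\<Sum>i\<in>UNIV. a $ i)"
proof -
  have "(\<Sum>i\<in>UNIV. a $ i) = (\<Sum>i\<in>X. a $ i) + (\<Sum>i\<in>-X. a $ i)"
    by (metis Compl_partition Compl_disjoint finite sum.union_disjoint)
  thus ?thesis unfolding eps_def by simp
qed
lemma cont: "continuous_on A (\<lambda>\<beta>::'n::finite weight. eps T (alpha \<beta>))"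
  unfolding eps_def alpha_def by (intro continuous_intros)
lemma chamber_props:
  assumes "chamber D"
  shows "D \<noteq> {}" "connected D" "\<And>\<beta> T. \<beta> \<in> D \<Longrightarrow> \<beta> \<in> Q \<and> eps T (alpha \<beta>) \<noteq> 0"
proof -
  obtain p where p: "p \<in> Q - (\<Union>T. wall T)" and D: "D = connected_component_set (Q - (\<Union>T. wall T)) p"
    using assms unfolding chamber_def by blast
  have "p \<in> D" using p D by (simp add: connected_component_refl)
  thus "D \<noteq> {}" by blast
  show "connected D" using D by simp
  fix \<beta> T assume "\<beta> \<in> D"
  hence "\<beta> \<in> Q - (\<Union>T. wall T)" using D connected_component_subset by blast
  thus "\<beta> \<in> Q \<and> eps T (alpha \<beta>) \<noteq> 0" unfolding wall_def by blast
qed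

lemma chamber_sign:
  assumes ch: "chamber D" and cl: "p0 \<in> closure D" and neg: "eps T (alpha p0) < 0"
  shows "\<forall>\<beta>\<in>D. eps T (alpha \<beta>) < 0"
proof (rule ccontr)
  define f where "f = (\<lambda>\<beta>::'a::finite weight. eps T (alpha \<beta>))"
  have fc: "continuous_on D f" unfolding f_def by (rule cont)
  assume "\<not> (\<forall>\<beta>\<in>D. eps T (alpha \<beta>) < 0)"
  then obtain b1 where b1: "b1 \<in> D" "f b1 > 0"
    using chamber_props(3)[OF ch] unfolding f_def by (meson linorder_neqE_linordered_idom)
  have pos: "f b \<ge> 0" if b: "b \<in> D" for b
  proof (rule ccontr)
    assume "\<not> f b \<ge> 0"
    hence "f b < 0" by simp
    have "connected (f ` D)" using connected_continuous_image[OF fc chamber_props(2)[OF ch]] .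
    hence "0 \<in> f ` D" using connectedD_interval[of "f ` D" "f b" "f b1" 0] b b1 \<open>f b < 0\<close> by auto
    then obtain z where "z \<in> D" "f z = 0" by auto
    thus False using chamber_props(3)[OF ch] unfolding f_def by blast
  qed
  have fc2: "continuous_on UNIV f" unfolding f_def by (rule cont)
  have "closed {x. 0 \<le> f x}"
    using continuous_closed_vimage[of "{0..}" f] fc2 closed_Collect_le[OF continuous_on_const fc2] by simp
  hence "closure D \<subseteq> {x. 0 \<le> f x}" using pos by (intro closure_minimal) auto
  hence "f p0 \<ge> 0" using cl by auto
  thus False using neg unfolding f_def by simp
qed

theorem mainTheorem7:
  fixes p0 :: "'n::finite weight" and S :: "'n set"
    and Dp Dm :: "'n weight set" and E :: "'n phb" and L :: "vec2 set"
  assumes "p0 \<in> Q"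
    and "{W. (\<exists>T. W = wall T) \<and> p0 \<in> W} = {wall S}"
    and "chamber Dp" and "p0 \<in> closure Dp" and "\<forall>\<beta>\<in>Dp. eps S (alpha \<beta>) > 0"
    and "chamber Dm" and "p0 \<in> closure Dm" and "\<forall>\<beta>\<in>Dm. eps S (alpha \<beta>) < 0"
    and "is_extension S E L"
  shows "(\<forall>\<beta>\<in>Dp. \<not> stable \<beta> E) \<and> ((\<forall>\<beta>\<in>Dm. stable \<beta> E) \<longleftrightarrow> \<not> split_ext S E L)"
proof -
  have ext: "is_line L" "invariant E L" "disc E L = S" using assms(9) unfolding is_extension_def by auto
  have epsC: "eps (-S) a = - eps S a" for a :: "real^'n" unfolding eps_def by simp
  have A: "\<forall>\<beta>\<in>Dp. \<not> stable \<beta> E"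
    using assms(5) ext unfolding stable_def by force
  have p0w: "eps S (alpha p0) = 0" using assms(2) unfolding wall_def by blast
  have apos: "alpha p0 $ i > 0" for i using assms(1) unfolding Q_def alpha_def by auto
  have B1: "\<not> (\<forall>\<beta>\<in>Dm. stable \<beta> E)" if sp: "split_ext S E L"
  proof -
    obtain M where M: "is_line M" "invariant E M" "disc E M = -S" using sp unfolding split_ext_def by blast
    obtain b where b: "b \<in> Dm" using chamber_props(1)[OF assms(6)] by blast
    have "eps (-S) (alpha b) > 0" using assms(8) b epsC by simp
    thus ?thesis using M b unfolding stable_def by force
  qed
  have B2: "\<forall>\<beta>\<in>Dm. stable \<beta> E" if nsp: "\<not> split_ext S E L"
  proof -
    have "eps (disc E L') (alpha \<beta>) < 0" if b: "\<beta> \<in> Dm" and L': "is_line L'" "invariant E L'" for \<beta> L'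
    proof (cases "L' = L")
      case True thus ?thesis using ext assms(8) b by simp
    next
      case False
      define T where "T = disc E L'"
      have TS: "T \<subseteq> -S" using False ext(3) unfolding T_def disc_def by auto
      have "T \<noteq> -S"
      proof
        assume "T = -S"
        obtain v where v: "v \<noteq> 0" "L = cline v" using ext(1) unfolding is_line_def by blast
        obtain w where w: "w \<noteq> 0" "L' = cline w" using L'(1) unfolding is_line_def by blast
        have "L' \<inter> L = {0}"
        proof (rule ccontr)
          assume "L' \<inter> L \<noteq> {0}"
          then obtain u where "u \<noteq> 0" "u \<in> L'" "u \<in> L" using cline_zero v w by blast
          thus False using cline_eq[of u w v] v w False by simp
        qed
        thus False using nsp L' \<open>T = -S\<close> unfolding split_ext_def T_def by blast
      qed
      then obtain j where j: "j \<in> -S" "j \<notin> T" using TS by blast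
      have "(\<Sum>i\<in>T. alpha p0 $ i) < (\<Sum>i\<in>-S. alpha p0 $ i)"
      proof -
        have "(\<Sum>i\<in>-S. alpha p0 $ i) = (\<Sum>i\<in>T. alpha p0 $ i) + (\<Sum>i\<in>(-S) - T. alpha p0 $ i)"
          using TS by (metis add.commute finite sum.subset_diff)
        moreover have "(\<Sum>i\<in>(-S) - T. alpha p0 $ i) > 0"
          using j apos by (intro sum_pos2[of _ j]) (auto simp: less_imp_le)
        ultimately show ?thesis by simp
      qed
      hence "eps T (alpha p0) < eps (-S) (alpha p0)" by (simp add: eps_alt)
      hence "eps T (alpha p0) < 0" using epsC p0w by simp
      thus ?thesis using chamber_sign[OF assms(6,7)] b unfolding T_def by blast
    qed
    thus ?thesis unfolding stable_def by blast
  qed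
  show ?thesis using A B1 B2 by blast
qed

end
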